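(* The ring of integers $\mathbb Z$ has strong avoidance.
   Context: All rings are commutative with $1\neq 0$. A ring map $\phi:R\to S$ has avoidance if whenever $I,I_1,\ldots,I_n$ are ideals of $R$ with $I\subseteq\bigcup_{k=1}^n I_k$, then $IS\subseteq I_kS$ for some $k$. A ring $S$ has strong avoidance if every ring map $R\to S$ has avoidance. *)

theory Defs
  imports Main
begin

definition is_ideal :: "'a::comm_ring_1 set \<Rightarrow> bool" where
  "is_ideal I \<longleftrightarrow> 0 \<in> I \<and> (\<forall>x\<in>I. \<forall>y\<in>I. x + y \<in> I) \<and> (\<forall>r x. x \<in> I \<longrightarrow> r * x \<in> I)"

definition ideal_gen :: "'a::comm_ring_1 set \<Rightarrow> 'a set" where
  "ideal_gen A = \<Inter>{J. is_ideal J \<and> A \<subseteq> J}"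

definition is_ring_hom :: "('a::comm_ring_1 \<Rightarrow> 'b::comm_ring_1) \<Rightarrow> bool" where
  "is_ring_hom f \<longleftrightarrow> f 1 = 1 \<and> (\<forall>x y. f (x + y) = f x + f y) \<and> (\<forall>x y. f (x * y) = f x * f y)"

definition ext_ideal :: "('a::comm_ring_1 \<Rightarrow> 'b::comm_ring_1) \<Rightarrow> 'a set \<Rightarrow> 'b set" where
  "ext_ideal f I = ideal_gen (f ` I)"

definition has_avoidance :: "('a::comm_ring_1 \<Rightarrow> 'b::comm_ring_1) \<Rightarrow> bool" where
  "has_avoidance f \<longleftrightarrow>
    (\<forall>(I::'a set) (J::nat \<Rightarrow> 'a set) (n::nat).
       is_ideal I \<longrightarrow> (\<forall>k\<in>{1..n}. is_ideal (J k)) \<longrightarrow> I \<subseteq> (\<Union>k\<in>{1..n}. J k) \<longrightarrow>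
       (\<exists>k\<in>{1..n}. ext_ideal f I \<subseteq> ext_ideal f (J k)))"

end

theory Submission
  imports Defs
begin

lemma gen_sub: "A \<subseteq> ideal_gen A"
  unfolding ideal_gen_def by blast

lemma gen_ideal: "is_ideal (ideal_gen (A::'a::comm_ring_1 set))"
  unfolding ideal_gen_def is_ideal_def by blast

lemma gen_least: "is_ideal J \<Longrightarrow> A \<subseteq> J \<Longrightarrow> ideal_gen A \<subseteq> J"
  unfolding ideal_gen_def by blast

lemma hom_0: "is_ring_hom f \<Longrightarrow> f 0 = 0"
  unfolding is_ring_hom_def by (metis add_cancel_right_right add_0)

lemma hom_neg: "is_ring_hom f \<Longrightarrow> f (- x) = - f x"
  using hom_0[of f] unfolding is_ring_hom_def
  by (metis add.right_inverse add_eq_0_iff)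

lemma hom_int: "is_ring_hom (f::'a::comm_ring_1 \<Rightarrow> 'b::comm_ring_1) \<Longrightarrow> f (of_int q) = of_int q"
proof (induction q rule: int_induct[where k=0])
  case base then show ?case using hom_0 by simp
next
  case (step1 i) then show ?case unfolding is_ring_hom_def by simp
next
  case (step2 i)
  have "f (of_int (i - 1)) = f (of_int i + - 1)" by simp
  also have "\<dots> = f (of_int i) + f (- 1)" using step2.prems unfolding is_ring_hom_def by blast
  also have "\<dots> = of_int i - 1" using step2 hom_neg[OF step2.prems, of 1] unfolding is_ring_hom_def by simp
  finally show ?case by simp
qed

theorem mainTheorem18:
  fixes \<phi> :: "'a::comm_ring_1 \<Rightarrow> int"
  assumes "is_ring_hom \<phi>"
  shows "has_avoidance \<phi>"
  unfolding has_avoidance_def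
proof (intro allI impI)
  fix I :: "'a set" and J :: "nat \<Rightarrow> 'a set" and n
  assume I: "is_ideal I" and Jid: "\<forall>k\<in>{1..n}. is_ideal (J k)" and cov: "I \<subseteq> (\<Union>k\<in>{1..n}. J k)"
  have addh: "\<And>x y. \<phi> (x + y) = \<phi> x + \<phi> y" and mulh: "\<And>x y. \<phi> (x*y) = \<phi> x * \<phi> y"
    using assms unfolding is_ring_hom_def by auto
  have I0: "0 \<in> I" and Iadd: "\<And>x y. x \<in> I \<Longrightarrow> y \<in> I \<Longrightarrow> x + y \<in> I"
    and Imul: "\<And>r x. x \<in> I \<Longrightarrow> r * x \<in> I" using I unfolding is_ideal_def by auto
  obtain x where xI: "x \<in> I" and gen: "\<And>a. a \<in> I \<Longrightarrow> \<phi> x dvd \<phi> a"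
  proof (cases "\<exists>a\<in>I. \<phi> a \<noteq> 0")
    case False
    then show ?thesis using that[of 0] I0 by auto
  next
    case True
    then obtain a where aI: "a \<in> I" and a0: "\<phi> a \<noteq> 0" by blast
    have "\<exists>b\<in>I. \<phi> b > 0"
    proof (cases "\<phi> a > 0")
      case True then show ?thesis using aI by blast
    next
      case False
      then show ?thesis using a0 Imul[OF aI, of "-1"] hom_neg[OF assms, of a] by (intro bexI[of _ "-a"]) auto
    qed
    define P where "P = (\<lambda>m::nat. \<exists>b\<in>I. \<phi> b = int m \<and> m > 0)"
    have "\<exists>m. P m" unfolding P_def using \<open>\<exists>b\<in>I. \<phi> b > 0\<close>
      by (metis of_nat_0_less_iff pos_int_cases)
    then have PL: "P (LEAST m. P m)" by (rule LeastI_ex)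
    then obtain x where xI: "x \<in> I" and xd: "\<phi> x = int (LEAST m. P m)" and pos: "(LEAST m. P m) > 0"
      unfolding P_def by blast
    show ?thesis
    proof (rule that[OF xI])
      fix b assume bI: "b \<in> I"
      define d where "d = \<phi> x"
      define q where "q = \<phi> b div d"
      have dpos: "d > 0" using pos xd d_def by simp
      have "b + (- of_int q) * x \<in> I" using Iadd[OF bI Imul[OF xI]] by blast
      moreover have "\<phi> (b + (- of_int q) * x) = \<phi> b mod d"
      proof -
        have "\<phi> (b + (- of_int q) * x) = \<phi> b + \<phi> (- of_int q) * \<phi> x"
          using addh mulh by metis
        also have "\<dots> = \<phi> b + (- q) * d"
          using hom_int[OF assms, of "-q"] d_def by simp
        also have "\<dots> = \<phi> b mod d" unfolding q_def by (simp add: minus_div_mult_eq_mod[symmetric])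
        finally show ?thesis .
      qed
      ultimately obtain c where cI: "c \<in> I" and cm: "\<phi> c = \<phi> b mod d" by blast
      have "\<phi> b mod d = 0"
      proof (rule ccontr)
        assume ne: "\<phi> b mod d \<noteq> 0"
        have ge: "\<phi> b mod d \<ge> 0" and lt: "\<phi> b mod d < d" using dpos by auto
        have "P (nat (\<phi> b mod d))" unfolding P_def using cI cm ge ne by auto
        then have "(LEAST m. P m) \<le> nat (\<phi> b mod d)" by (rule Least_le)
        then show False using lt xd d_def ge by linarith
      qed
      then show "\<phi> x dvd \<phi> b" unfolding d_def by (simp add: dvd_eq_mod_eq_0)
    qed
  qed
  from xI cov obtain k where k: "k \<in> {1..n}" and xJ: "x \<in> J k" by blast
  have "ext_ideal \<phi> I \<subseteq> ext_ideal \<phi> (J k)"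
    unfolding ext_ideal_def
  proof (rule gen_least[OF gen_ideal])
    show "\<phi> ` I \<subseteq> ideal_gen (\<phi> ` J k)"
    proof
      fix y assume "y \<in> \<phi> ` I"
      then obtain a where aI: "a \<in> I" and y: "y = \<phi> a" by blast
      obtain m where "\<phi> a = \<phi> x * m" using gen[OF aI] by (auto elim: dvdE)
      moreover have "\<phi> x \<in> ideal_gen (\<phi> ` J k)" using gen_sub xJ by blast
      ultimately show "y \<in> ideal_gen (\<phi> ` J k)" using gen_ideal[of "\<phi> ` J k"] y
        unfolding is_ideal_def by (metis mult.commute)
    qed
  qed
  then show "\<exists>k\<in>{1..n}. ext_ideal \<phi> I \<subseteq> ext_ideal \<phi> (J k)" using k by blast
qed

end
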